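(* Let $M$ be a real $N\times N$ matrix all of whose column sums $\sum_{i}M_{i,j}$ are equal, and let $\Gamma(M)=\max_j\sum_{i=1}^N|M_{i,j}|$. Then every decomposition $M=\sum_a c_a S_a$ with finitely many stochastic matrices $S_a$ and real coefficients $c_a$ satisfies $\sum_a|c_a|\ge\Gamma(M)$, and there exists such a decomposition with $\sum_a|c_a|=\Gamma(M)$.
   Context: A stochastic matrix is a real square matrix with nonnegative entries whose columns each sum to $1$. *)

theory Defs
  imports "HOL-Analysis.Analysis"
begin

text \<open>Matrices are real N x N matrices of type real^'n^'n; entry (i,j) is M $ i $ j
  (row i, column j). A stochastic matrix has nonnegative entries and column sums 1.\<close>

definition stochastic :: "real^'n^'n \<Rightarrow> bool" where
  "stochastic S \<longleftrightarrow> (\<forall>i j. S $ i $ j \<ge> 0) \<and> (\<forall>j. (\<Sum>i\<in>UNIV. S $ i $ j) = 1)"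

definition Gamma :: "real^'n^'n \<Rightarrow> real" where
  "Gamma M = (MAX j\<in>UNIV. (\<Sum>i\<in>UNIV. \<bar>M $ i $ j\<bar>))"

end

theory Submission
  imports Defs
begin

lemma Gamma_ge: "(\<Sum>i\<in>UNIV. \<bar>M $ i $ j\<bar>) \<le> Gamma M"
  unfolding Gamma_def by (rule Max_ge) auto

lemma Gamma_attained: "\<exists>j. Gamma M = (\<Sum>i\<in>UNIV. \<bar>M $ i $ j\<bar>)"
proof -
  have "Gamma M \<in> (\<lambda>j. \<Sum>i\<in>UNIV. \<bar>M $ i $ j\<bar>) ` UNIV"
    unfolding Gamma_def by (rule Max_in) auto
  then show ?thesis by auto
qed

lemma scale_stoch:
  fixes A :: "real^'n^'n"
  assumes nn: "\<forall>i j. A $ i $ j \<ge> 0" and cs: "\<forall>j. (\<Sum>i\<in>UNIV. A $ i $ j) = c" and c0: "c \<ge> 0"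
  shows "\<exists>S. stochastic S \<and> A = c *\<^sub>R S"
proof (cases "c = 0")
  case True
  define i0 :: 'n where "i0 = undefined"
  define S :: "real^'n^'n" where "S = (\<chi> i j. if i = i0 then 1 else 0)"
  have "stochastic S" unfolding stochastic_def S_def by auto
  moreover have "A = 0"
  proof -
    have "\<forall>i j. A $ i $ j = 0"
    proof (intro allI)
      fix i j
      have "(\<Sum>i\<in>UNIV. A $ i $ j) = 0" using cs True by auto
      then have "\<forall>i\<in>UNIV. A $ i $ j = 0"
        using sum_nonneg_eq_0_iff[of UNIV "\<lambda>i. A $ i $ j"] nn by auto
      then show "A $ i $ j = 0" by auto
    qed
    then show ?thesis by (simp add: vec_eq_iff)
  qed
  ultimately show ?thesis using True by auto
next
  case False
  define S where "S = (1/c) *\<^sub>R A"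
  have "stochastic S" unfolding stochastic_def S_def
    using nn cs c0 False by (auto simp: sum_divide_distrib[symmetric])
  moreover have "A = c *\<^sub>R S" using False unfolding S_def by simp
  ultimately show ?thesis by blast
qed

theorem mainTheorem4:
  fixes M :: "real^'n^'n"
  assumes "\<forall>j k. (\<Sum>i\<in>UNIV. M $ i $ j) = (\<Sum>i\<in>UNIV. M $ i $ k)"
  shows "(\<forall>(m::nat) (c::nat \<Rightarrow> real) (S::nat \<Rightarrow> real^'n^'n).
            (\<forall>a<m. stochastic (S a)) \<and> M = (\<Sum>a<m. c a *\<^sub>R S a)
            \<longrightarrow> (\<Sum>a<m. \<bar>c a\<bar>) \<ge> Gamma M)
       \<and> (\<exists>(m::nat) (c::nat \<Rightarrow> real) (S::nat \<Rightarrow> real^'n^'n).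
            (\<forall>a<m. stochastic (S a)) \<and> M = (\<Sum>a<m. c a *\<^sub>R S a)
            \<and> (\<Sum>a<m. \<bar>c a\<bar>) = Gamma M)"
proof (intro conjI allI impI)
  fix m c and S :: "nat \<Rightarrow> real^'n^'n"
  assume h: "(\<forall>a<m. stochastic (S a)) \<and> M = (\<Sum>a<m. c a *\<^sub>R S a)"
  obtain j where j: "Gamma M = (\<Sum>i\<in>UNIV. \<bar>M $ i $ j\<bar>)" using Gamma_attained by blast
  have "Gamma M = (\<Sum>i\<in>UNIV. \<bar>\<Sum>a<m. c a * S a $ i $ j\<bar>)"
    using j h by simp
  also have "\<dots> \<le> (\<Sum>i\<in>UNIV. \<Sum>a<m. \<bar>c a\<bar> * S a $ i $ j)"
  proof (rule sum_mono)
    fix i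
    have "\<bar>\<Sum>a<m. c a * S a $ i $ j\<bar> \<le> (\<Sum>a<m. \<bar>c a * S a $ i $ j\<bar>)" by (rule sum_abs)
    also have "\<dots> = (\<Sum>a<m. \<bar>c a\<bar> * S a $ i $ j)"
      using h by (intro sum.cong) (auto simp: abs_mult stochastic_def)
    finally show "\<bar>\<Sum>a<m. c a * S a $ i $ j\<bar> \<le> (\<Sum>a<m. \<bar>c a\<bar> * S a $ i $ j)" .
  qed
  also have "\<dots> = (\<Sum>a<m. \<bar>c a\<bar> * (\<Sum>i\<in>UNIV. S a $ i $ j))"
    by (subst sum.swap) (simp add: sum_distrib_left)
  also have "\<dots> = (\<Sum>a<m. \<bar>c a\<bar>)"
    using h by (intro sum.cong) (auto simp: stochastic_def)
  finally show "(\<Sum>a<m. \<bar>c a\<bar>) \<ge> Gamma M" .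
next
  define i0 :: 'n where "i0 = undefined"
  define s where "s = (\<Sum>i\<in>UNIV. M $ i $ i0)"
  have s: "\<And>j. (\<Sum>i\<in>UNIV. M $ i $ j) = s" using assms s_def by auto
  define G where "G = Gamma M"
  define g where "g j = (\<Sum>i\<in>UNIV. \<bar>M $ i $ j\<bar>)" for j
  have gG: "g j \<le> G" for j unfolding g_def G_def by (rule Gamma_ge)
  have sg: "\<bar>s\<bar> \<le> g j" for j
    unfolding g_def s[of j, symmetric] by (rule sum_abs)
  define cp where "cp = (G + s) / 2"
  define cm where "cm = (G - s) / 2"
  define P :: "real^'n^'n" where "P = (\<chi> i j. max (M $ i $ j) 0 + (if i = i0 then (G - g j)/2 else 0))"
  define Q :: "real^'n^'n" where "Q = (\<chi> i j. max (- M $ i $ j) 0 + (if i = i0 then (G - g j)/2 else 0))"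
  have PQ: "M = P - Q" unfolding P_def Q_def by (simp add: vec_eq_iff max_def)
  have cp0: "cp \<ge> 0" and cm0: "cm \<ge> 0" using sg[of i0] gG[of i0] unfolding cp_def cm_def by auto
  have Pnn: "\<forall>i j. P $ i $ j \<ge> 0" using gG unfolding P_def by auto
  have Qnn: "\<forall>i j. Q $ i $ j \<ge> 0" using gG unfolding Q_def by auto
  have maxsplit: "(\<Sum>i\<in>UNIV. max (M $ i $ j) 0) = (g j + s)/2 \<and> (\<Sum>i\<in>UNIV. max (- M $ i $ j) 0) = (g j - s)/2" for j
  proof -
    have e1: "(\<Sum>i\<in>UNIV. max (M $ i $ j) 0) + (\<Sum>i\<in>UNIV. max (- M $ i $ j) 0) = g j"
      unfolding g_def sum.distrib[symmetric] by (intro sum.cong) (auto simp: max_def)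
    have e2: "(\<Sum>i\<in>UNIV. max (M $ i $ j) 0) - (\<Sum>i\<in>UNIV. max (- M $ i $ j) 0) = s"
      unfolding s[of j, symmetric] sum_subtractf[symmetric] by (intro sum.cong) (auto simp: max_def)
    from e1 e2 show ?thesis by (simp add: field_simps)
  qed
  have Pcs: "\<forall>j. (\<Sum>i\<in>UNIV. P $ i $ j) = cp"
  proof
    fix j
    have "(\<Sum>i\<in>UNIV. P $ i $ j) = (\<Sum>i\<in>UNIV. max (M $ i $ j) 0) + (G - g j)/2"
      unfolding P_def by (simp add: sum.distrib)
    then show "(\<Sum>i\<in>UNIV. P $ i $ j) = cp" using maxsplit[of j] unfolding cp_def by (simp add: field_simps)
  qed
  have Qcs: "\<forall>j. (\<Sum>i\<in>UNIV. Q $ i $ j) = cm"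
  proof
    fix j
    have "(\<Sum>i\<in>UNIV. Q $ i $ j) = (\<Sum>i\<in>UNIV. max (- M $ i $ j) 0) + (G - g j)/2"
      unfolding Q_def by (simp add: sum.distrib)
    then show "(\<Sum>i\<in>UNIV. Q $ i $ j) = cm" using maxsplit[of j] unfolding cm_def by (simp add: field_simps)
  qed
  obtain SP where SP: "stochastic SP" "P = cp *\<^sub>R SP" using scale_stoch[OF Pnn Pcs cp0] by blast
  obtain SQ where SQ: "stochastic SQ" "Q = cm *\<^sub>R SQ" using scale_stoch[OF Qnn Qcs cm0] by blast
  define cc where "cc = (\<lambda>a::nat. if a = 0 then cp else - cm)"
  define SS where "SS = (\<lambda>a::nat. if a = 0 then SP else SQ)"
  have "(\<forall>a<2. stochastic (SS a)) \<and> M = (\<Sum>a<2. cc a *\<^sub>R SS a)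
            \<and> (\<Sum>a<2. \<bar>cc a\<bar>) = Gamma M"
  proof (intro conjI)
    have U: "{..<2::nat} = {0,1}" by auto
    show "\<forall>a<2. stochastic (SS a)" using SP SQ unfolding SS_def by auto
    have "(\<Sum>a<2. cc a *\<^sub>R SS a) = cp *\<^sub>R SP + (- cm) *\<^sub>R SQ"
      unfolding U cc_def SS_def by simp
    also have "\<dots> = P - Q" using SP SQ by simp
    finally show "M = (\<Sum>a<2. cc a *\<^sub>R SS a)" using PQ by simp
    have "(\<Sum>a<2. \<bar>cc a\<bar>) = \<bar>cp\<bar> + \<bar>- cm\<bar>"
      unfolding U cc_def by simp
    also have "\<dots> = G" using cp0 cm0 unfolding cp_def cm_def by (simp add: field_simps)
    finally show "(\<Sum>a<2. \<bar>cc a\<bar>) = Gamma M" unfolding G_def .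
  qed
  then show "\<exists>(m::nat) (c::nat \<Rightarrow> real) (S::nat \<Rightarrow> real^'n^'n).
            (\<forall>a<m. stochastic (S a)) \<and> M = (\<Sum>a<m. c a *\<^sub>R S a)
            \<and> (\<Sum>a<m. \<bar>c a\<bar>) = Gamma M" by blast
qed

end
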